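(* Let $c\in(0,1/2)$ and $\bar\mu\in[-1+c,1-c]^n$, and let $\mu=\bar\mu+\Delta$ where $\Delta$ is chosen uniformly at random from $[-c,c]^n$. Let $f:\mathbb{R}^n\to\mathbb{R}$ be any multilinear function, written as $f(x)=\sum_{S\subseteq N}\bar f(S,\mu)\,(x-\mu)_S$. Then for any $T\subseteq U\subseteq N$ and any $a,b>0$, $$\Pr_{\Delta}\Big[\,|\bar f(T,\mu)|\leq a \;\Big|\; |\bar f(U,\mu)|\geq b\,\Big] \leq \sqrt{\frac{a}{b}}\,(4/c)^{|U\setminus T|/2}.$$
   Context: $N=\{1,2,\ldots,n\}$. For $S\subseteq N$ and $y\in\mathbb{R}^n$, $y_S=\prod_{i\in S}y_i$. For a multilinear polynomial $f:\mathbb{R}^n\to\mathbb{R}$ and $\mu\in\mathbb{R}^n$, the numbers $\bar f(S,\mu)$ ($S\subseteq N$) are the unique coefficients such that $f(x)=\sum_{S\subseteq N}\bar f(S,\mu)\prod_{i\in S}(x_i-\mu_i)$ for all $x$. For events $A,B$, $\Pr[A\mid B]$ is defined to be $0$ when $\Pr[B]=0$. *)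

theory Defs
  imports "HOL-Probability.Probability"
begin

text \<open>Vectors in R^n are functions nat => real, indexed by N = {1..n}.\<close>

definition multilinear :: "nat \<Rightarrow> ((nat \<Rightarrow> real) \<Rightarrow> real) \<Rightarrow> bool" where
  "multilinear n f \<longleftrightarrow> (\<exists>\<alpha> :: nat set \<Rightarrow> real.
     \<forall>x. f x = (\<Sum>S\<in>Pow {1..n}. \<alpha> S * (\<Prod>i\<in>S. x i)))"

text \<open>The unique coefficients fbar(S,mu) with f(x) = sum_S fbar(S,mu) prod_{i in S} (x_i - mu_i);
  coefficients are normalised to 0 outside Pow N to make them unique.\<close>
definition fbar :: "nat \<Rightarrow> ((nat \<Rightarrow> real) \<Rightarrow> real) \<Rightarrow> nat set \<Rightarrow> (nat \<Rightarrow> real) \<Rightarrow> real" where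
  "fbar n f S \<mu> = (THE c :: nat set \<Rightarrow> real.
      (\<forall>R. R \<notin> Pow {1..n} \<longrightarrow> c R = 0) \<and>
      (\<forall>x. f x = (\<Sum>R\<in>Pow {1..n}. c R * (\<Prod>i\<in>R. (x i - \<mu> i))))) S"

definition unif_cube :: "nat \<Rightarrow> real \<Rightarrow> (nat \<Rightarrow> real) measure" where
  "unif_cube n c = PiM {1..n} (\<lambda>_. uniform_measure lborel {-c..c})"

definition cond_prob :: "'a measure \<Rightarrow> 'a set \<Rightarrow> 'a set \<Rightarrow> real" where
  "cond_prob M A B = (if measure M B = 0 then 0 else measure M (A \<inter> B) / measure M B)"

end

theory Submission
  imports Defs
begin


definition Fc :: "nat \<Rightarrow> (nat set \<Rightarrow> real) \<Rightarrow> nat set \<Rightarrow> (nat \<Rightarrow> real) \<Rightarrow> real" where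
  "Fc n \<alpha> S \<mu> = (\<Sum>R\<in>{R\<in>Pow {1..n}. S \<subseteq> R}. \<alpha> R * (\<Prod>i\<in>R-S. \<mu> i))"

lemma expand_exists:
  fixes \<alpha> :: "nat set \<Rightarrow> real"
  shows "(\<Sum>R\<in>Pow {1..n}. \<alpha> R * (\<Prod>i\<in>R. x i)) =
         (\<Sum>R\<in>Pow {1..n}. Fc n \<alpha> R \<mu> * (\<Prod>i\<in>R. (x i - \<mu> i)))"
proof -
  have "(\<Sum>R\<in>Pow {1..n}. \<alpha> R * (\<Prod>i\<in>R. x i)) =
     (\<Sum>R\<in>Pow {1..n}. \<alpha> R * (\<Sum>X\<in>Pow R. (\<Prod>i\<in>X. (x i - \<mu> i)) * (\<Prod>i\<in>R-X. \<mu> i)))"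
  proof (rule sum.cong[OF refl])
    fix R assume "R \<in> Pow {1..n}"
    then have "finite R" by (meson PowD finite_atLeastAtMost finite_subset)
    have "(\<Prod>i\<in>R. x i) = (\<Prod>i\<in>R. (x i - \<mu> i) + \<mu> i)" by simp
    also have "\<dots> = (\<Sum>X\<in>Pow R. (\<Prod>i\<in>X. (x i - \<mu> i)) * (\<Prod>i\<in>R-X. \<mu> i))"
      by (rule prod_add[OF \<open>finite R\<close>])
    finally show "\<alpha> R * (\<Prod>i\<in>R. x i) = \<alpha> R * (\<Sum>X\<in>Pow R. (\<Prod>i\<in>X. (x i - \<mu> i)) * (\<Prod>i\<in>R-X. \<mu> i))" by simp
  qed
  also have "\<dots> = (\<Sum>R\<in>Pow {1..n}. \<Sum>X\<in>{X\<in>Pow {1..n}. X \<subseteq> R}. \<alpha> R * ((\<Prod>i\<in>X. (x i - \<mu> i)) * (\<Prod>i\<in>R-X. \<mu> i)))"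
    apply (rule sum.cong[OF refl])
    apply (subst sum_distrib_left)
    apply (rule sum.cong)
    by auto
  also have "\<dots> = (\<Sum>X\<in>Pow {1..n}. \<Sum>R\<in>{R\<in>Pow {1..n}. X \<subseteq> R}. \<alpha> R * ((\<Prod>i\<in>X. (x i - \<mu> i)) * (\<Prod>i\<in>R-X. \<mu> i)))"
    by (rule sum.swap_restrict) auto
  also have "\<dots> = (\<Sum>R\<in>Pow {1..n}. Fc n \<alpha> R \<mu> * (\<Prod>i\<in>R. (x i - \<mu> i)))"
    unfolding Fc_def sum_distrib_right
    by (intro sum.cong refl) (simp add: algebra_simps)
  finally show ?thesis .
qed

lemma sum_pow_zero:
  fixes e :: "nat set \<Rightarrow> real"
  assumes "\<And>S. S \<subseteq> A \<Longrightarrow> (\<Sum>R\<in>Pow S. e R) = 0" "finite A"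
  shows "S \<subseteq> A \<Longrightarrow> e S = 0"
proof (induction "card S" arbitrary: S rule: less_induct)
  case less
  have fS: "finite S" using less(2) assms(2) finite_subset by blast
  have "(\<Sum>R\<in>Pow S. e R) = e S + (\<Sum>R\<in>Pow S - {S}. e R)"
    using fS by (subst sum.remove[of _ S]) auto
  also have "(\<Sum>R\<in>Pow S - {S}. e R) = 0"
  proof (rule sum.neutral, rule ballI)
    fix R assume "R \<in> Pow S - {S}"
    then have "R \<subset> S" by auto
    then have "card R < card S" using fS psubset_card_mono by blast
    then show "e R = 0" using less \<open>R \<subset> S\<close> by auto
  qed
  finally show ?case using assms(1)[OF less(2)] by simp
qed

lemma coeff_unique:
  fixes e :: "nat set \<Rightarrow> real"
  assumes "\<forall>x. (\<Sum>R\<in>Pow {1..n}. e R * (\<Prod>i\<in>R. (x i - \<mu> i))) = 0"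
  shows "S \<subseteq> {1..n} \<Longrightarrow> e S = 0"
proof (rule sum_pow_zero[of "{1..n}"])
  fix S assume S: "S \<subseteq> {1..n}"
  define x where "x = (\<lambda>i. \<mu> i + (if i \<in> S then 1 else 0))"
  have "0 = (\<Sum>R\<in>Pow {1..n}. e R * (\<Prod>i\<in>R. (x i - \<mu> i)))" using assms by simp
  also have "\<dots> = (\<Sum>R\<in>Pow {1..n}. if R \<subseteq> S then e R else 0)"
  proof (rule sum.cong[OF refl])
    fix R assume R: "R \<in> Pow {1..n}"
    have fR: "finite R" using R finite_subset by auto
    have "(\<Prod>i\<in>R. (x i - \<mu> i)) = (\<Prod>i\<in>R. (if i \<in> S then 1 else 0))" unfolding x_def by simp
    also have "\<dots> = (if R \<subseteq> S then 1 else 0)"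
    proof (cases "R \<subseteq> S")
      case True then show ?thesis by (auto intro!: prod.neutral)
    next
      case False then obtain i where "i \<in> R" "i \<notin> S" by auto
      then have "(\<Prod>i\<in>R. (if i \<in> S then 1 else 0)) = (0::real)"
        using fR by (subst prod_zero_iff) auto
      then show ?thesis using False by simp
    qed
    finally show "e R * (\<Prod>i\<in>R. (x i - \<mu> i)) = (if R \<subseteq> S then e R else 0)" by simp
  qed
  also have "\<dots> = (\<Sum>R\<in>{R\<in>Pow {1..n}. R \<subseteq> S}. e R)"
    by (rule sum.inter_filter[symmetric]) simp
  also have "{R\<in>Pow {1..n}. R \<subseteq> S} = Pow S" using S by auto
  finally show "(\<Sum>R\<in>Pow S. e R) = 0" by simp
qed auto

lemma fbar_eq:
  assumes f: "\<forall>x. f x = (\<Sum>S\<in>Pow {1..n}. \<alpha> S * (\<Prod>i\<in>S. x i))" and S: "S \<subseteq> {1..n}"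
  shows "fbar n f S \<mu> = Fc n \<alpha> S \<mu>"
proof -
  define c where "c = (\<lambda>R. if R \<in> Pow {1..n} then Fc n \<alpha> R \<mu> else 0)"
  let ?P = "\<lambda>c. (\<forall>R. R \<notin> Pow {1..n} \<longrightarrow> c R = 0) \<and>
      (\<forall>x. f x = (\<Sum>R\<in>Pow {1..n}. c R * (\<Prod>i\<in>R. (x i - \<mu> i))))"
  have Pc: "?P c"
  proof (intro conjI allI impI)
    fix R assume "R \<notin> Pow {1..n}" then show "c R = 0" by (simp add: c_def)
  next
    fix x
    have "f x = (\<Sum>R\<in>Pow {1..n}. Fc n \<alpha> R \<mu> * (\<Prod>i\<in>R. (x i - \<mu> i)))"
      using f expand_exists[where \<alpha>=\<alpha> and n=n and \<mu>=\<mu> and x=x] by simp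
    also have "\<dots> = (\<Sum>R\<in>Pow {1..n}. c R * (\<Prod>i\<in>R. (x i - \<mu> i)))"
      by (rule sum.cong) (auto simp: c_def)
    finally show "f x = (\<Sum>R\<in>Pow {1..n}. c R * (\<Prod>i\<in>R. (x i - \<mu> i)))" .
  qed
  have uniq: "d = c" if "?P d" for d
  proof
    fix R
    show "d R = c R"
    proof (cases "R \<in> Pow {1..n}")
      case False then show ?thesis using that Pc by auto
    next
      case True
      have "\<forall>x. (\<Sum>R\<in>Pow {1..n}. (d R - c R) * (\<Prod>i\<in>R. (x i - \<mu> i))) = 0"
      proof
        fix x
        have "(\<Sum>R\<in>Pow {1..n}. (d R - c R) * (\<Prod>i\<in>R. (x i - \<mu> i))) =
          (\<Sum>R\<in>Pow {1..n}. d R * (\<Prod>i\<in>R. (x i - \<mu> i))) - (\<Sum>R\<in>Pow {1..n}. c R * (\<Prod>i\<in>R. (x i - \<mu> i)))"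
          by (simp add: left_diff_distrib sum_subtractf)
        then show "(\<Sum>R\<in>Pow {1..n}. (d R - c R) * (\<Prod>i\<in>R. (x i - \<mu> i))) = 0"
          using that Pc by (simp del: Pow_iff)
      qed
      from coeff_unique[OF this] True show ?thesis by auto
    qed
  qed
  have "(THE c. ?P c) = c" using Pc uniq by (intro the_equality) auto
  then show ?thesis unfolding fbar_def c_def using S by auto
qed



lemma sqrt2c: fixes c :: real assumes "0 < c" shows "sqrt (2*c) \<le> 2 * sqrt c"
proof -
  have "sqrt (2*c) \<le> sqrt (4*c)" using assms by simp
  also have "sqrt (4*c) = sqrt 4 * sqrt c" by (rule real_sqrt_mult)
  also have "sqrt (4::real) = 2" by (simp add: real_sqrt_eq_iff)
  finally show ?thesis by simp
qed

lemma X: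
  fixes c t :: real assumes "0 < c" and u: "0 \<le> c - t" "0 \<le> c + t"
  shows "sqrt (c - t) + sqrt (c + t) \<le> 2 * sqrt c"
proof -
  have "(sqrt (c - t) + sqrt (c + t))^2 = (c - t) + (c + t) + 2 * (sqrt (c - t) * sqrt (c + t))"
    using u by (simp add: power2_sum)
  also have "sqrt (c - t) * sqrt (c + t) = sqrt ((c-t)*(c+t))" by (rule real_sqrt_mult[symmetric])
  also have "sqrt ((c-t)*(c+t)) \<le> c"
    using u assms by (intro real_le_lsqrt) (auto simp: algebra_simps power2_eq_square)
  finally have A: "(sqrt (c - t) + sqrt (c + t))^2 \<le> (2 * sqrt c)^2" using assms by (simp add: power_mult_distrib)
  have B: "0 \<le> 2 * sqrt c" using assms by simp
  show ?thesis by (rule power2_le_imp_le[OF A B])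
qed
lemma sqrt_sum_bound:
  fixes c t :: real assumes "0 < c"
  shows "sqrt (c - t) + sqrt (c + t) \<le> 2 * sqrt c"
proof (cases "t \<le> c \<and> -c \<le> t")
  case True
  then show ?thesis using X[OF assms] by auto
next
  case False
  show ?thesis
  proof (cases "t > c")
    case True
    have "sqrt (c + t) = sqrt ((t - c) + 2*c)" by simp
    also have "\<dots> \<le> sqrt (t - c) + sqrt (2*c)" using True assms by (intro sqrt_add_le_add_sqrt) auto
    finally have "sqrt (c - t) + sqrt (c + t) \<le> sqrt (2*c)"
      using real_sqrt_minus[of "t - c"] by simp
    also have "sqrt (2*c) \<le> 2 * sqrt c" using assms by (rule sqrt2c)
    finally show ?thesis .
  next
    case F2: False
    then have T: "t < - c" using False by auto
    have "sqrt (c - t) = sqrt ((-c - t) + 2*c)" by simp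
    also have "\<dots> \<le> sqrt (-c - t) + sqrt (2*c)" using T assms by (intro sqrt_add_le_add_sqrt) auto
    finally have "sqrt (c - t) + sqrt (c + t) \<le> sqrt (2*c)"
      using real_sqrt_minus[of "c + t"] by simp
    also have "sqrt (2*c) \<le> 2 * sqrt c" using assms by (rule sqrt2c)
    finally show ?thesis .
  qed
qed

lemma inv_sqrt_integral:
  fixes c t0 :: real assumes "0 < c"
  shows "((\<lambda>t. 1 / sqrt \<bar>t - t0\<bar>) has_integral (2 * sqrt (c - t0) + 2 * sqrt (c + t0))) {-c..c}"
proof -
  have "((\<lambda>t. 1 / sqrt \<bar>t - t0\<bar>) has_integral ((\<lambda>t. 2 * sqrt (t - t0)) c - (\<lambda>t. 2 * sqrt (t - t0)) (-c))) {-c..c}"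
  proof (rule fundamental_theorem_of_calculus_interior_strong[where S="{t0}"])
    fix x assume x: "x \<in> {-c<..<c} - {t0}"
    then have ne: "x - t0 \<noteq> 0" by auto
    have "((\<lambda>t. sqrt (t - t0)) has_real_derivative (1 / (2 * sqrt \<bar>x - t0\<bar>))) (at x)"
    proof -
      have d: "DERIV sqrt (x - t0) :> (1 / (2 * sqrt \<bar>x - t0\<bar>))"
      proof (rule DERIV_real_sqrt_generic)
        assume "x - t0 < 0"
        then have "sqrt (x - t0) = - sqrt (t0 - x)" using real_sqrt_minus[of "t0 - x"] by simp
        then show "1 / (2 * sqrt \<bar>x - t0\<bar>) = - inverse (sqrt (x - t0)) / 2"
          using \<open>x - t0 < 0\<close> by (simp add: divide_simps)
      qed (use ne in \<open>auto simp: divide_simps\<close>)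
      have "((\<lambda>t. t - t0) has_real_derivative 1) (at x)" by (auto intro!: derivative_eq_intros)
      from DERIV_chain2[OF d this] show ?thesis by simp
    qed
    then have "((\<lambda>t. 2 * sqrt (t - t0)) has_real_derivative 2 * (1 / (2 * sqrt \<bar>x - t0\<bar>))) (at x)"
      by (rule DERIV_cmult)
    then show "((\<lambda>t. 2 * sqrt (t - t0)) has_vector_derivative 1 / sqrt \<bar>x - t0\<bar>) (at x)"
      by (simp add: has_real_derivative_iff_has_vector_derivative)
  next
    show "continuous_on {-c..c} (\<lambda>t. 2 * sqrt (t - t0))" by (intro continuous_intros)
  qed (use assms in auto)
  moreover have "(\<lambda>t. 2 * sqrt (t - t0)) c - (\<lambda>t. 2 * sqrt (t - t0)) (-c) = 2 * sqrt (c - t0) + 2 * sqrt (c + t0)"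
    using real_sqrt_minus[of "c + t0"] by (simp add: algebra_simps)
  ultimately show ?thesis by simp
qed

definition gi :: "real \<Rightarrow> ennreal" where
  "gi x = (if x = 0 then \<infinity> else ennreal (1 / sqrt \<bar>x\<bar>))"

lemma gi_measurable[measurable]: "gi \<in> borel_measurable borel"
  unfolding gi_def by measurable

lemma sqrt_sum_nonneg:
  fixes c t :: real assumes "0 < c"
  shows "0 \<le> sqrt (c - t) + sqrt (c + t)"
proof -
  have "sqrt (t - c) \<le> sqrt (c + t)" using assms by simp
  then show ?thesis using real_sqrt_minus[of "t - c"] by simp
qed

lemma one_dim:
  fixes c q m r :: real assumes c: "0 < c"
  shows "(\<integral>\<^sup>+t. gi (q + (m + t) * r) \<partial>uniform_measure lborel {-c..c}) \<le> ennreal (sqrt (4 / c)) * gi r"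
proof (cases "r = 0")
  case True
  then show ?thesis using c by (simp add: gi_def ennreal_mult_top)
next
  case False
  define t0 where "t0 = - (q / r + m)"
  have eq: "q + (m + t) * r = r * (t - t0)" for t
    unfolding t0_def using False by (simp add: field_simps)
  have "(\<integral>\<^sup>+t. gi (q + (m + t) * r) \<partial>uniform_measure lborel {-c..c})
      = (\<integral>\<^sup>+t. gi (q + (m + t) * r) * indicator {-c..c} t \<partial>lborel) / emeasure lborel {-c..c}"
    by (rule nn_integral_uniform_measure) auto
  also have "(\<integral>\<^sup>+t. gi (q + (m + t) * r) * indicator {-c..c} t \<partial>lborel)
      = (\<integral>\<^sup>+t. ennreal (1 / sqrt \<bar>r\<bar>) * ennreal (indicator {-c..c} t * (1 / sqrt \<bar>t - t0\<bar>)) \<partial>lborel)"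
  proof (rule nn_integral_cong_AE)
    show "AE t in lborel. gi (q + (m + t) * r) * indicator {-c..c} t =
        ennreal (1 / sqrt \<bar>r\<bar>) * ennreal (indicator {-c..c} t * (1 / sqrt \<bar>t - t0\<bar>))"
      using AE_lborel_singleton[of t0]
    proof eventually_elim
      case (elim t)
      then show ?case using False unfolding eq gi_def
        by (auto simp: indicator_def abs_mult real_sqrt_mult ennreal_mult[symmetric])
    qed
  qed
  also have "\<dots> = ennreal (1 / sqrt \<bar>r\<bar>) * (\<integral>\<^sup>+t. ennreal (indicator {-c..c} t * (1 / sqrt \<bar>t - t0\<bar>)) \<partial>lborel)"
    by (rule nn_integral_cmult) measurable
  also have "(\<integral>\<^sup>+t. ennreal (indicator {-c..c} t * (1 / sqrt \<bar>t - t0\<bar>)) \<partial>lborel) = ennreal (2 * sqrt (c - t0) + 2 * sqrt (c + t0))"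
    by (rule nn_integral_has_integral_lebesgue[OF _ inv_sqrt_integral[OF c]]) auto
  also have "emeasure lborel {-c..c} = ennreal (2 * c)" using c by simp
  finally have I: "(\<integral>\<^sup>+t. gi (q + (m + t) * r) \<partial>uniform_measure lborel {-c..c})
     = ennreal (1 / sqrt \<bar>r\<bar>) * ennreal (2 * sqrt (c - t0) + 2 * sqrt (c + t0)) / ennreal (2 * c)" .
  have V: "0 \<le> 2 * sqrt (c - t0) + 2 * sqrt (c + t0)" using sqrt_sum_nonneg[OF c, of t0] by linarith
  have "ennreal (1 / sqrt \<bar>r\<bar>) * ennreal (2 * sqrt (c - t0) + 2 * sqrt (c + t0))
       = ennreal (1 / sqrt \<bar>r\<bar> * (2 * sqrt (c - t0) + 2 * sqrt (c + t0)))"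
    by (rule ennreal_mult[symmetric]) (use V in auto)
  with I have "(\<integral>\<^sup>+t. gi (q + (m + t) * r) \<partial>uniform_measure lborel {-c..c})
     = ennreal (1 / sqrt \<bar>r\<bar> * (2 * sqrt (c - t0) + 2 * sqrt (c + t0)) / (2 * c))"
    using c V by (simp only:) (rule divide_ennreal, auto)
  also have "\<dots> \<le> ennreal (1 / sqrt \<bar>r\<bar> * (4 * sqrt c) / (2 * c))"
    using c sqrt_sum_bound[OF c, of t0] by (intro ennreal_leI divide_right_mono mult_left_mono) auto
  also have "1 / sqrt \<bar>r\<bar> * (4 * sqrt c) / (2 * c) = sqrt (4 / c) * (1 / sqrt \<bar>r\<bar>)"
  proof -
    have "sqrt (4 / c) = 2 / sqrt c" by (simp add: real_sqrt_divide)
    moreover have "4 * sqrt c / (2 * c) = 2 / sqrt c" using c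
      by (simp add: field_simps)
    moreover have "1 / sqrt \<bar>r\<bar> * (4 * sqrt c) / (2 * c) = 1 / sqrt \<bar>r\<bar> * (4 * sqrt c / (2 * c))" by simp
    ultimately show ?thesis by simp
  qed
  also have "ennreal (sqrt (4 / c) * (1 / sqrt \<bar>r\<bar>)) = ennreal (sqrt (4 / c)) * gi r"
    using False c by (subst ennreal_mult) (auto simp: gi_def)
  finally show ?thesis .
qed



lemma Fc_upd: "j \<in> R \<Longrightarrow> Fc n \<alpha> R (\<mu>(j:=v)) = Fc n \<alpha> R \<mu>"
  unfolding Fc_def by (intro sum.cong refl arg_cong2[where f="(*)"] prod.cong) auto

lemma Fc_split:
  assumes "j \<notin> S"
  shows "Fc n \<alpha> S \<mu> = Fc n \<alpha> S (\<mu>(j:=0)) + \<mu> j * Fc n \<alpha> (insert j S) \<mu>"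
proof -
  let ?A = "{R\<in>Pow {1..n}. S \<subseteq> R}"
  have fA: "finite ?A" by simp
  have fin: "R \<in> ?A \<Longrightarrow> finite R" for R by (auto intro: finite_subset)
  have 1: "Fc n \<alpha> S (\<mu>(j:=0)) = (\<Sum>R\<in>?A. if j \<in> R then 0 else \<alpha> R * (\<Prod>i\<in>R-S. \<mu> i))"
    unfolding Fc_def
  proof (rule sum.cong[OF refl])
    fix R assume R: "R \<in> ?A"
    show "\<alpha> R * (\<Prod>i\<in>R-S. (\<mu>(j:=0)) i) = (if j \<in> R then 0 else \<alpha> R * (\<Prod>i\<in>R-S. \<mu> i))"
    proof (cases "j \<in> R")
      case True
      then have "j \<in> R - S" using assms by auto
      then have "(\<Prod>i\<in>R-S. (\<mu>(j:=0)) i) = 0" using fin[OF R]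
        by (subst prod_zero_iff) auto
      then show ?thesis using True by simp
    next
      case False
      then show ?thesis by (auto intro!: prod.cong)
    qed
  qed
  have 2: "\<mu> j * Fc n \<alpha> (insert j S) \<mu> = (\<Sum>R\<in>?A. if j \<in> R then \<alpha> R * (\<Prod>i\<in>R-S. \<mu> i) else 0)"
  proof -
    have e: "{R\<in>Pow {1..n}. insert j S \<subseteq> R} = {R\<in>?A. j \<in> R}" by auto
    have "\<mu> j * Fc n \<alpha> (insert j S) \<mu> = (\<Sum>R\<in>{R\<in>?A. j \<in> R}. \<alpha> R * (\<mu> j * (\<Prod>i\<in>R-insert j S. \<mu> i)))"
      unfolding Fc_def e sum_distrib_left by (intro sum.cong refl) (simp add: algebra_simps)
    also have "\<dots> = (\<Sum>R\<in>{R\<in>?A. j \<in> R}. \<alpha> R * (\<Prod>i\<in>R-S. \<mu> i))"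
    proof (rule sum.cong[OF refl])
      fix R assume R: "R \<in> {R\<in>?A. j \<in> R}"
      then have "j \<in> R - S" "finite (R - S)" using assms fin by auto
      then have "(\<Prod>i\<in>R-S. \<mu> i) = \<mu> j * (\<Prod>i\<in>R-S-{j}. \<mu> i)" by (simp add: prod.remove)
      moreover have "R - S - {j} = R - insert j S" by auto
      ultimately show "\<alpha> R * (\<mu> j * (\<Prod>i\<in>R-insert j S. \<mu> i)) = \<alpha> R * (\<Prod>i\<in>R-S. \<mu> i)" by simp
    qed
    also have "\<dots> = (\<Sum>R\<in>?A. if j \<in> R then \<alpha> R * (\<Prod>i\<in>R-S. \<mu> i) else 0)"
      by (rule sum.inter_filter[OF fA])
    finally show ?thesis .
  qed
  have "Fc n \<alpha> S \<mu> = (\<Sum>R\<in>?A. (if j \<in> R then 0 else \<alpha> R * (\<Prod>i\<in>R-S. \<mu> i)) + (if j \<in> R then \<alpha> R * (\<Prod>i\<in>R-S. \<mu> i) else 0))"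
    unfolding Fc_def by (intro sum.cong refl) auto
  also have "\<dots> = Fc n \<alpha> S (\<mu>(j:=0)) + \<mu> j * Fc n \<alpha> (insert j S) \<mu>"
    unfolding 1 2 by (rule sum.distrib)
  finally show ?thesis .
qed



abbreviation UC :: "real \<Rightarrow> nat \<Rightarrow> real measure" where
  "UC c \<equiv> (\<lambda>_. uniform_measure lborel {-c..c})"

lemma comp_meas: "i \<in> I \<Longrightarrow> (\<lambda>\<Delta>. \<Delta> i) \<in> borel_measurable (PiM I (UC c))"
proof -
  assume "i \<in> I"
  then have "(\<lambda>\<Delta>. \<Delta> i) \<in> measurable (PiM I (UC c)) (UC c i)" by (rule measurable_component_singleton)
  also have "measurable (PiM I (UC c)) (UC c i) = borel_measurable (PiM I (UC c))"
    by (rule measurable_cong_sets) auto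
  finally show ?thesis .
qed

lemma meas_G: "(\<lambda>\<Delta>. Fc n \<alpha> S (\<lambda>i. mb i + \<Delta> i)) \<in> borel_measurable (PiM {1..n} (UC c))"
  unfolding Fc_def
  by (intro borel_measurable_sum borel_measurable_times borel_measurable_const borel_measurable_prod
      borel_measurable_add comp_meas) auto

lemma ps_unif: "0 < c \<Longrightarrow> prob_space (uniform_measure lborel {-c..(c::real)})"
  by (rule prob_space_uniform_measure) auto


lemma ind_step:
  fixes c :: real and mb :: "nat \<Rightarrow> real" and h :: "(nat \<Rightarrow> real) \<Rightarrow> ennreal"
  assumes c: "0 < c" and U: "U \<subseteq> {1..n}"
    and hm: "h \<in> borel_measurable (PiM {1..n} (UC c))"
    and hinv: "\<And>\<Delta> j t. j \<in> U \<Longrightarrow> h (\<Delta>(j:=t)) = h \<Delta>"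
  shows "finite D \<Longrightarrow> D \<subseteq> U \<Longrightarrow> S \<inter> D = {} \<Longrightarrow>
    (\<integral>\<^sup>+\<Delta>. gi (Fc n \<alpha> S (\<lambda>i. mb i + \<Delta> i)) * h \<Delta> \<partial>PiM {1..n} (UC c))
      \<le> ennreal (sqrt (4/c)) ^ card D * (\<integral>\<^sup>+\<Delta>. gi (Fc n \<alpha> (S \<union> D) (\<lambda>i. mb i + \<Delta> i)) * h \<Delta> \<partial>PiM {1..n} (UC c))"
proof (induction D arbitrary: S rule: finite_induct)
  case empty then show ?case by simp
next
  case (insert j D)
  let ?P = "PiM {1..n} (UC c)"
  let ?I = "{1..n} - {j}"
  let ?K = "ennreal (sqrt (4/c))"
  define G where "G S' \<Delta> = Fc n \<alpha> S' (\<lambda>i. mb i + \<Delta> i)" for S' \<Delta>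
  have jI: "j \<in> {1..n}" "j \<notin> S" "j \<in> U" using insert U by auto
  have Ieq: "{1..n} = insert j ?I" using jI by auto
  have Peq: "?P = PiM (insert j ?I) (UC c)" by (rule arg_cong[where f="\<lambda>I. PiM I (UC c)", OF Ieq])
  interpret product_sigma_finite "UC c"
    by (rule product_sigma_finite.intro) (rule prob_space_imp_sigma_finite[OF ps_unif[OF c]])
  have pj: "prob_space (UC c j)" using ps_unif[OF c] .
  have measG: "G S' \<in> borel_measurable ?P" for S'
    unfolding G_def[abs_def] by (rule meas_G)
  have meas: "(\<lambda>\<Delta>. gi (G S' \<Delta>) * h \<Delta>) \<in> borel_measurable ?P" for S'
    using measG[of S'] hm by measurable
  have meas2: "(\<lambda>\<Delta>. ?K * gi (G S' \<Delta>) * h \<Delta>) \<in> borel_measurable ?P" for S'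
    using measG[of S'] hm by measurable
  have "(\<integral>\<^sup>+\<Delta>. gi (G S \<Delta>) * h \<Delta> \<partial>?P) = (\<integral>\<^sup>+x. \<integral>\<^sup>+y. gi (G S (x(j:=y))) * h (x(j:=y)) \<partial>UC c j \<partial>PiM ?I (UC c))"
    unfolding Peq by (rule product_nn_integral_insert) (use meas[of S] Peq in auto)
  also have "\<dots> \<le> (\<integral>\<^sup>+x. \<integral>\<^sup>+y. ?K * gi (G (insert j S) (x(j:=y))) * h (x(j:=y)) \<partial>UC c j \<partial>PiM ?I (UC c))"
  proof (rule nn_integral_mono)
    fix x
    define r where "r = G (insert j S) x"
    define q where "q = Fc n \<alpha> S ((\<lambda>i. mb i + x i)(j:=0))"
    have e1: "(\<lambda>i. mb i + (x(j:=y)) i) = (\<lambda>i. mb i + x i)(j := mb j + y)" for y by auto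
    have Gy2: "G (insert j S) (x(j:=y)) = r" for y
      unfolding r_def G_def e1 by (rule Fc_upd) simp
    have Gy: "G S (x(j:=y)) = q + (mb j + y) * r" for y
    proof -
      have "G S (x(j:=y)) = Fc n \<alpha> S ((\<lambda>i. mb i + (x(j:=y)) i)(j:=0)) + (mb j + y) * Fc n \<alpha> (insert j S) (\<lambda>i. mb i + (x(j:=y)) i)"
        unfolding G_def by (subst Fc_split[OF jI(2)]) simp
      moreover have "(\<lambda>i. mb i + (x(j:=y)) i)(j:=0) = (\<lambda>i. mb i + x i)(j:=0)" by auto
      ultimately show ?thesis using Gy2[of y] unfolding q_def G_def by simp
    qed
    have hy: "h (x(j:=y)) = h x" for y using hinv[OF jI(3)] .
    have "(\<integral>\<^sup>+y. gi (G S (x(j:=y))) * h (x(j:=y)) \<partial>UC c j) = (\<integral>\<^sup>+y. gi (q + (mb j + y) * r) \<partial>UC c j) * h x"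
      unfolding Gy hy by (rule nn_integral_multc) measurable
    also have "\<dots> \<le> ?K * gi r * h x" by (intro mult_right_mono one_dim c) simp
    also have "\<dots> = (\<integral>\<^sup>+y. ?K * gi (G (insert j S) (x(j:=y))) * h (x(j:=y)) \<partial>UC c j)"
      using prob_space.emeasure_space_1[OF pj] by (simp add: Gy2 hy)
    finally show "(\<integral>\<^sup>+y. gi (G S (x(j:=y))) * h (x(j:=y)) \<partial>UC c j)
       \<le> (\<integral>\<^sup>+y. ?K * gi (G (insert j S) (x(j:=y))) * h (x(j:=y)) \<partial>UC c j)" .
  qed
  also have "\<dots> = (\<integral>\<^sup>+\<Delta>. ?K * gi (G (insert j S) \<Delta>) * h \<Delta> \<partial>?P)"
    unfolding Peq by (rule product_nn_integral_insert[symmetric]) (use meas2[of "insert j S"] Peq in auto)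
  also have "\<dots> = ?K * (\<integral>\<^sup>+\<Delta>. gi (G (insert j S) \<Delta>) * h \<Delta> \<partial>?P)"
    unfolding mult.assoc by (rule nn_integral_cmult) (use meas in simp)
  also have "\<dots> \<le> ?K * (?K ^ card D * (\<integral>\<^sup>+\<Delta>. gi (G (insert j S \<union> D) \<Delta>) * h \<Delta> \<partial>?P))"
    using insert.IH[of "insert j S"] insert.prems insert.hyps unfolding G_def
    by (intro mult_left_mono) auto
  also have "\<dots> = ?K ^ card (insert j D) * (\<integral>\<^sup>+\<Delta>. gi (G (S \<union> insert j D) \<Delta>) * h \<Delta> \<partial>?P)"
    using insert.hyps by (simp add: mult.assoc)
  finally show ?case unfolding G_def .
qed



lemma powr_eq: "0 < (x::real) \<Longrightarrow> x powr (real d / 2) = sqrt x ^ d"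
  by (simp add: powr_half_sqrt_powr powr_realpow real_sqrt_power)

theorem lemma1:
  fixes n :: nat and c a b :: real and \<mu>bar :: "nat \<Rightarrow> real"
    and f :: "(nat \<Rightarrow> real) \<Rightarrow> real" and T U :: "nat set"
  assumes "0 < c" "c < 1/2"
    and "\<forall>i\<in>{1..n}. \<mu>bar i \<in> {-1 + c..1 - c}"
    and "multilinear n f"
    and "T \<subseteq> U" "U \<subseteq> {1..n}"
    and "0 < a" "0 < b"
  shows "cond_prob (unif_cube n c)
           {\<Delta> \<in> space (unif_cube n c). \<bar>fbar n f T (\<lambda>i. \<mu>bar i + \<Delta> i)\<bar> \<le> a}
           {\<Delta> \<in> space (unif_cube n c). \<bar>fbar n f U (\<lambda>i. \<mu>bar i + \<Delta> i)\<bar> \<ge> b}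
         \<le> sqrt (a / b) * (4 / c) powr (real (card (U - T)) / 2)"
proof -
  note c = assms(1) and TU = assms(5) and U = assms(6) and a = assms(7) and b = assms(8)
  obtain \<alpha> where f: "\<forall>x. f x = (\<Sum>S\<in>Pow {1..n}. \<alpha> S * (\<Prod>i\<in>S. x i))"
    using assms(4) unfolding multilinear_def by blast
  let ?P = "PiM {1..n} (UC c)"
  have Peq: "unif_cube n c = ?P" unfolding unif_cube_def by simp
  interpret P: prob_space ?P by (rule prob_space_PiM) (rule ps_unif[OF c])
  define G where "G S \<Delta> = Fc n \<alpha> S (\<lambda>i. \<mu>bar i + \<Delta> i)" for S \<Delta>
  have fbG: "S \<subseteq> {1..n} \<Longrightarrow> fbar n f S (\<lambda>i. \<mu>bar i + \<Delta> i) = G S \<Delta>" for S \<Delta>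
    unfolding G_def by (rule fbar_eq[OF f])
  have measG: "G S \<in> borel_measurable ?P" for S
    unfolding G_def[abs_def] by (rule meas_G)
  define A where "A = {\<Delta> \<in> space ?P. \<bar>G T \<Delta>\<bar> \<le> a}"
  define B where "B = {\<Delta> \<in> space ?P. b \<le> \<bar>G U \<Delta>\<bar>}"
  have AS: "{\<Delta> \<in> space (unif_cube n c). \<bar>fbar n f T (\<lambda>i. \<mu>bar i + \<Delta> i)\<bar> \<le> a} = A"
    unfolding A_def Peq using fbG[of T] TU U by auto
  have BS: "{\<Delta> \<in> space (unif_cube n c). \<bar>fbar n f U (\<lambda>i. \<mu>bar i + \<Delta> i)\<bar> \<ge> b} = B"
    unfolding B_def Peq using fbG[of U] U by auto
  have Am: "A \<in> sets ?P" unfolding A_def using measG[of T] by measurable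
  have Bm: "B \<in> sets ?P" unfolding B_def using measG[of U] by measurable
  define h where "h \<Delta> = indicator B \<Delta>" for \<Delta> :: "nat \<Rightarrow> real"
  have hm: "(\<lambda>\<Delta>. indicator B \<Delta> :: ennreal) \<in> borel_measurable ?P" using Bm by measurable
  have GUinv: "G U (\<Delta>(j:=t)) = G U \<Delta>" if "j \<in> U" for \<Delta> j t
  proof -
    have "(\<lambda>i. \<mu>bar i + (\<Delta>(j:=t)) i) = (\<lambda>i. \<mu>bar i + \<Delta> i)(j := \<mu>bar j + t)" by auto
    then show ?thesis unfolding G_def using Fc_upd[OF that] by simp
  qed
  have spinv: "\<Delta>(j:=t) \<in> space ?P \<longleftrightarrow> \<Delta> \<in> space ?P" if "j \<in> U" for \<Delta> j t
    using that U by (auto simp: space_PiM PiE_def extensional_def)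
  have hinv: "(indicator B (\<Delta>(j:=t)) :: ennreal) = indicator B \<Delta>" if "j \<in> U" for \<Delta> j t
    using GUinv[OF that] spinv[OF that] unfolding B_def by (simp add: indicator_def)
  let ?K = "ennreal (sqrt (4/c))"
  let ?d = "card (U - T)"
  have fD: "finite (U - T)" using U finite_subset by auto
  have main: "(\<integral>\<^sup>+\<Delta>. gi (G T \<Delta>) * indicator B \<Delta> \<partial>?P) \<le> ?K ^ ?d * (\<integral>\<^sup>+\<Delta>. gi (G U \<Delta>) * indicator B \<Delta> \<partial>?P)"
  proof -
    have "T \<union> (U - T) = U" using TU by auto
    then show ?thesis
      using ind_step[OF c U hm hinv fD, where mb="\<mu>bar" and \<alpha>=\<alpha> and S=T] unfolding G_def by auto
  qed
  have "emeasure ?P (A \<inter> B) = (\<integral>\<^sup>+\<Delta>. indicator (A \<inter> B) \<Delta> \<partial>?P)"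
    using Am Bm by simp
  also have "\<dots> \<le> (\<integral>\<^sup>+\<Delta>. ennreal (sqrt a) * (gi (G T \<Delta>) * indicator B \<Delta>) \<partial>?P)"
  proof (rule nn_integral_mono)
    fix \<Delta> assume "\<Delta> \<in> space ?P"
    show "indicator (A \<inter> B) \<Delta> \<le> ennreal (sqrt a) * (gi (G T \<Delta>) * indicator B \<Delta>)"
    proof (cases "\<Delta> \<in> A \<inter> B")
      case False then show ?thesis by simp
    next
      case True
      then have le: "\<bar>G T \<Delta>\<bar> \<le> a" "\<Delta> \<in> B" unfolding A_def by auto
      show ?thesis
      proof (cases "G T \<Delta> = 0")
        case True then show ?thesis using le a by (simp add: gi_def ennreal_mult_top)
      next
        case False
        have "1 \<le> sqrt a * (1 / sqrt \<bar>G T \<Delta>\<bar>)"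
          using le a False by (simp add: field_simps)
        then have "ennreal 1 \<le> ennreal (sqrt a * (1 / sqrt \<bar>G T \<Delta>\<bar>))" by (rule ennreal_leI)
        then show ?thesis using False le a True
          by (simp add: gi_def ennreal_mult[symmetric] indicator_def del: ennreal_1)
      qed
    qed
  qed
  also have "\<dots> = ennreal (sqrt a) * (\<integral>\<^sup>+\<Delta>. gi (G T \<Delta>) * indicator B \<Delta> \<partial>?P)"
    by (rule nn_integral_cmult) (use measG[of T] Bm in measurable)
  also have "\<dots> \<le> ennreal (sqrt a) * (?K ^ ?d * (\<integral>\<^sup>+\<Delta>. gi (G U \<Delta>) * indicator B \<Delta> \<partial>?P))"
    by (intro mult_left_mono main) simp
  also have "(\<integral>\<^sup>+\<Delta>. gi (G U \<Delta>) * indicator B \<Delta> \<partial>?P) \<le> (\<integral>\<^sup>+\<Delta>. ennreal (1 / sqrt b) * indicator B \<Delta> \<partial>?P)"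
  proof (rule nn_integral_mono)
    fix \<Delta> assume "\<Delta> \<in> space ?P"
    show "gi (G U \<Delta>) * indicator B \<Delta> \<le> ennreal (1 / sqrt b) * indicator B \<Delta>"
    proof (cases "\<Delta> \<in> B")
      case False then show ?thesis by simp
    next
      case True
      then have le: "b \<le> \<bar>G U \<Delta>\<bar>" unfolding B_def by auto
      then have ne: "G U \<Delta> \<noteq> 0" using b by auto
      have "1 / sqrt \<bar>G U \<Delta>\<bar> \<le> 1 / sqrt b" using le b
        by (intro divide_left_mono) auto
      then show ?thesis using True ne by (simp add: gi_def ennreal_leI)
    qed
  qed
  also have "(\<integral>\<^sup>+\<Delta>. ennreal (1 / sqrt b) * indicator B \<Delta> \<partial>?P) = ennreal (1 / sqrt b) * emeasure ?P B"
    by (rule nn_integral_cmult_indicator[OF Bm])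
  finally have E: "emeasure ?P (A \<inter> B) \<le> ennreal (sqrt a) * (?K ^ ?d * (ennreal (1 / sqrt b) * emeasure ?P B))"
    by (simp add: mult_left_mono)
  define R where "R = sqrt (a / b) * sqrt (4 / c) ^ ?d"
  have R0: "0 \<le> R" unfolding R_def using a b c by simp
  have "ennreal (sqrt a) * (?K ^ ?d * (ennreal (1 / sqrt b) * emeasure ?P B)) = ennreal (R * P.prob B)"
  proof -
    have "?K ^ ?d = ennreal (sqrt (4/c) ^ ?d)" by (rule ennreal_power) (use c in simp)
    moreover have "sqrt (a / b) = sqrt a * (1 / sqrt b)" by (simp add: real_sqrt_divide)
    ultimately show ?thesis using a b c unfolding R_def P.emeasure_eq_measure
      by (simp add: ennreal_mult[symmetric] mult_ac)
  qed
  with E have "P.prob (A \<inter> B) \<le> R * P.prob B"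
    unfolding P.emeasure_eq_measure using R0 by (simp add: ennreal_le_iff)
  then have CP: "cond_prob ?P A B \<le> R"
    unfolding cond_prob_def using R0 measure_nonneg[of ?P B]
    by (auto simp: divide_le_eq)
  have "(4 / c) powr (real ?d / 2) = sqrt (4 / c) ^ ?d" using c by (intro powr_eq) simp
  then show ?thesis using CP unfolding AS BS unfolding Peq R_def by simp
qed


end
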